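(* Let $G$ be a finite connected graph with nodes $\{1,\dots,n_v\}$ and edges $\{1,\dots,n_e\}$. Let $B\in\mathbb{R}^{n_e\times n_v}$ be its edge-vertex incidence matrix and $L=B^\top B$. Let $\varrho\in\{1,\dots,n_v\}$ be a node. Let $B_{\mathtt{C}\widehat\varrho}$ be $B$ restricted to the rows in $\mathtt{C}$ and with column $\varrho$ removed, and let $L_{\widehat\varrho\widehat\varrho}$ be $L$ with row and column $\varrho$ removed. Let $\mathtt{C}\subseteq\{1,\dots,n_e\}$ be such that $$\Big(\prod_{i\neq\varrho}\mathrm{deg}(i)\Big)^{-1}\det\begin{bmatrix}0_{|\mathtt{C}|}&B_{\mathtt{C}\widehat\varrho}\\-(B_{\mathtt{C}\widehat\varrho})^\top&\mathrm{skew}(L_{\widehat\varrho\widehat\varrho})\end{bmatrix}\neq0.$$ Then $\mathtt{C}$ is the set of (simple) edges of a dimer-rooted forest of $G$ with root $\varrho$.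
   Context: In the incidence matrix, each edge $e=(i,j)$ with $i<j$ has row $B_{e,:}$ with entry $+1$ at $i$, $-1$ at $j$, and $0$ elsewhere. $\mathrm{deg}(i)$ is the number of neighbours of node $i$. For a square matrix $M$, $\mathrm{skew}(M)=\mathrm{triu}(M)-\mathrm{triu}(M)^\top$, where $\mathrm{triu}$ is the upper-triangular part with respect to the node ordering. Rows and columns are taken in increasing index order. $0_m$ is the $m\times m$ zero matrix. Definition: a dimer-rooted forest of $G$ with root $\varrho$ is a set of edges $\mathtt{C}$ such that (i) $\mathtt{C}$ contains no cycle and $|\mathtt{C}|$ has the same parity as $n_v-1$; and (ii) $\mathtt{C}$ can be completed to a spanning subgraph by adding an edge-disjoint set of dimers (edges of $G$, not part of $\mathtt{C}$) such that each connected component of $\mathtt{C}$ is either a tree rooted at $\varrho$ or a tree rooted at one dimer. *)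

theory Defs
  imports "Jordan_Normal_Form.Determinant" "Jordan_Normal_Form.DL_Submatrix"
begin

text \<open>A graph with nodes 1..nv and edges 1..ne is given by ed :: nat => nat * nat;
  edge e (1 <= e <= ne) is ed e = (i,j) with 1 <= i < j <= nv.
  JNF matrices are 0-indexed: node i is column i-1, edge e is row e-1.\<close>

definition edge_graph :: "nat \<Rightarrow> nat \<Rightarrow> (nat \<Rightarrow> nat \<times> nat) \<Rightarrow> bool" where
  "edge_graph nv ne ed \<longleftrightarrow>
     (\<forall>e\<in>{1..ne}. 1 \<le> fst (ed e) \<and> fst (ed e) < snd (ed e) \<and> snd (ed e) \<le> nv)
     \<and> inj_on ed {1..ne}"

definition joins :: "(nat \<Rightarrow> nat \<times> nat) \<Rightarrow> nat \<Rightarrow> nat \<Rightarrow> nat \<Rightarrow> bool" where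
  "joins ed e u v \<longleftrightarrow> ed e = (u, v) \<or> ed e = (v, u)"

definition adj_rel :: "(nat \<Rightarrow> nat \<times> nat) \<Rightarrow> nat set \<Rightarrow> (nat \<times> nat) set" where
  "adj_rel ed S = {(u, v). \<exists>e\<in>S. joins ed e u v}"

definition connected_graph :: "nat \<Rightarrow> nat \<Rightarrow> (nat \<Rightarrow> nat \<times> nat) \<Rightarrow> bool" where
  "connected_graph nv ne ed \<longleftrightarrow>
     (\<forall>u\<in>{1..nv}. \<forall>v\<in>{1..nv}. (u, v) \<in> (adj_rel ed {1..ne})\<^sup>*)"

definition deg :: "nat \<Rightarrow> nat \<Rightarrow> (nat \<Rightarrow> nat \<times> nat) \<Rightarrow> nat \<Rightarrow> nat" where
  "deg nv ne ed i = card {j\<in>{1..nv}. \<exists>e\<in>{1..ne}. joins ed e i j}"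

definition incidence_mat :: "nat \<Rightarrow> nat \<Rightarrow> (nat \<Rightarrow> nat \<times> nat) \<Rightarrow> real mat" where
  "incidence_mat nv ne ed = mat ne nv (\<lambda>(r, c).
      if c + 1 = fst (ed (r + 1)) then 1
      else if c + 1 = snd (ed (r + 1)) then -1 else 0)"

definition laplacian_mat :: "nat \<Rightarrow> nat \<Rightarrow> (nat \<Rightarrow> nat \<times> nat) \<Rightarrow> real mat" where
  "laplacian_mat nv ne ed = transpose_mat (incidence_mat nv ne ed) * incidence_mat nv ne ed"

definition triu :: "'a::zero mat \<Rightarrow> 'a mat" where
  "triu M = mat (dim_row M) (dim_col M) (\<lambda>(i, j). if i \<le> j then M $$ (i, j) else 0)"

definition skew :: "'a::ab_group_add mat \<Rightarrow> 'a mat" where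
  "skew M = triu M - transpose_mat (triu M)"

definition B_C_rho :: "nat \<Rightarrow> nat \<Rightarrow> (nat \<Rightarrow> nat \<times> nat) \<Rightarrow> nat set \<Rightarrow> nat \<Rightarrow> real mat" where
  "B_C_rho nv ne ed C rho =
     submatrix (incidence_mat nv ne ed) ((\<lambda>e. e - 1) ` C) ({0..<nv} - {rho - 1})"

definition L_rho_rho :: "nat \<Rightarrow> nat \<Rightarrow> (nat \<Rightarrow> nat \<times> nat) \<Rightarrow> nat \<Rightarrow> real mat" where
  "L_rho_rho nv ne ed rho =
     submatrix (laplacian_mat nv ne ed) ({0..<nv} - {rho - 1}) ({0..<nv} - {rho - 1})"

definition block_mat :: "nat \<Rightarrow> nat \<Rightarrow> (nat \<Rightarrow> nat \<times> nat) \<Rightarrow> nat set \<Rightarrow> nat \<Rightarrow> real mat" where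
  "block_mat nv ne ed C rho =
     four_block_mat (0\<^sub>m (card C) (card C)) (B_C_rho nv ne ed C rho)
        (- transpose_mat (B_C_rho nv ne ed C rho)) (skew (L_rho_rho nv ne ed rho))"

definition has_cycle :: "(nat \<Rightarrow> nat \<times> nat) \<Rightarrow> nat set \<Rightarrow> bool" where
  "has_cycle ed S \<longleftrightarrow> (\<exists>es vs. es \<noteq> [] \<and> length vs = length es \<and> distinct es \<and> distinct vs
       \<and> set es \<subseteq> S
       \<and> (\<forall>k<length es. joins ed (es ! k) (vs ! k) (vs ! ((k + 1) mod length es))))"

definition components :: "nat \<Rightarrow> (nat \<Rightarrow> nat \<times> nat) \<Rightarrow> nat set \<Rightarrow> nat set set" where
  "components nv ed C = {{v\<in>{1..nv}. (u, v) \<in> (adj_rel ed C)\<^sup>*} | u. u \<in> {1..nv}}"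

definition touches :: "(nat \<Rightarrow> nat \<times> nat) \<Rightarrow> nat \<Rightarrow> nat set \<Rightarrow> bool" where
  "touches ed d K \<longleftrightarrow> fst (ed d) \<in> K \<or> snd (ed d) \<in> K"

text \<open>Dimer-rooted forest with root rho: (i) no cycle and parity of |C| equals that of nv-1;
  (ii) there is a set D of dimers (edges of G not in C) such that every component of C is a tree
  either rooted at rho (contains rho, touched by no dimer) or rooted at one dimer
  (does not contain rho, touched by exactly one dimer, at exactly one of its endpoints).\<close>
definition dimer_rooted_forest ::
  "nat \<Rightarrow> nat \<Rightarrow> (nat \<Rightarrow> nat \<times> nat) \<Rightarrow> nat \<Rightarrow> nat set \<Rightarrow> bool" where
  "dimer_rooted_forest nv ne ed rho C \<longleftrightarrow>
     C \<subseteq> {1..ne} \<and> \<not> has_cycle ed C \<and> even (card C + (nv - 1))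
     \<and> (\<exists>D. D \<subseteq> {1..ne} \<and> D \<inter> C = {} \<and>
          (\<forall>K\<in>components nv ed C.
              (rho \<in> K \<and> (\<forall>d\<in>D. \<not> touches ed d K))
            \<or> (rho \<notin> K \<and> (\<exists>!d. d \<in> D \<and> touches ed d K)
                 \<and> (\<forall>d\<in>D. touches ed d K \<longrightarrow> \<not> (fst (ed d) \<in> K \<and> snd (ed d) \<in> K)))))"

end

theory Submission
  imports Defs "HOL-Combinatorics.Orbits" "HOL-Combinatorics.Cycles"
begin


lemma perm_card_orbit:
  assumes "permutation p"
  shows "card (orbit p y) = least_power p y"
proof -
  have lp: "(p ^^ least_power p y) y = y" "least_power p y > 0"
    using least_power_of_permutation[OF assms] by auto
  have o: "orbit p y = (\<lambda>m. (p^^m) y) ` {..<least_power p y}"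
    using orbit_altdef_bounded[OF lp] by auto
  have "distinct (support p y)" using cycle_of_permutation[OF assms] .
  hence "inj_on (\<lambda>m. (p^^m) y) {..<least_power p y}"
    by (simp add: distinct_map atLeast_upt)
  thus ?thesis using o by (simp add: card_image)
qed

abbreviation iv :: "(nat \<Rightarrow> nat) \<Rightarrow> nat \<Rightarrow> nat" where "iv f \<equiv> inv_into UNIV f"

lemma orb_same:
  assumes "permutation p" "y \<in> orbit p x" shows "orbit p y = orbit p x"
  using orbit_cyclic_eq3[OF cyclic_on_orbit'[OF assms(1)] assms(2)] .

lemma orb_p:
  assumes "y \<in> orbit p x" shows "p y \<in> orbit p x"
  using assms by (rule orbit.step)

lemma orb_inv:
  assumes "permutation p" "y \<in> orbit p x" shows "iv p y \<in> orbit p x"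
proof -
  have "y \<in> orbit (iv p) x" using orbit_inv_eq[OF assms(1)] assms(2) by simp
  hence "iv p y \<in> orbit (iv p) x" by (rule orbit.step)
  thus ?thesis using orbit_inv_eq[OF assms(1)] by simp
qed

lemma perm_inv_f: "permutation p \<Longrightarrow> iv p (p x) = x"
  by (meson bij_is_inj inv_f_f permutation_bijective)
lemma perm_f_inv: "permutation p \<Longrightarrow> p (iv p x) = x"
  by (meson bij_is_surj surj_f_inv_f permutation_bijective)

definition revc :: "(nat \<Rightarrow> nat) \<Rightarrow> nat set \<Rightarrow> nat \<Rightarrow> nat" where
  "revc p Ob = p \<circ> perm_restrict (iv p) Ob \<circ> perm_restrict (iv p) Ob"

lemma revc_apply:
  assumes "permutation p" "Ob = orbit p x0"
  shows "revc p Ob y = (if y \<in> Ob then iv p y else p y)"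
proof (cases "y \<in> Ob")
  case True
  hence "iv p y \<in> Ob" using orb_inv[OF assms(1), of y x0] assms(2) by simp
  have "revc p Ob y = p (perm_restrict (iv p) Ob (perm_restrict (iv p) Ob y))"
    unfolding revc_def by simp
  also have "\<dots> = p (iv p (iv p y))" using True \<open>iv p y \<in> Ob\<close> by (simp only: perm_restrict_simps)
  also have "\<dots> = iv p y" using perm_f_inv[OF assms(1)] by simp
  finally show ?thesis using True by simp
next
  case False
  have "revc p Ob y = p (perm_restrict (iv p) Ob (perm_restrict (iv p) Ob y))"
    unfolding revc_def by simp
  also have "\<dots> = p y" using perm_restrict_simps(2)[OF False] by simp
  finally show ?thesis using False by simp
qed

lemma restr_permutes:
  assumes "permutation p" "Ob = orbit p x0"
  shows "perm_restrict (iv p) Ob permutes Ob"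
proof (rule inj_imp_permutes)
  show "finite Ob" using finite_orbit[OF permutation_self_in_orbit[OF assms(1)]] assms(2) by simp
  show "inj_on (perm_restrict (iv p) Ob) Ob"
  proof (rule inj_onI)
    fix a b assume ab: "a \<in> Ob" "b \<in> Ob" "perm_restrict (iv p) Ob a = perm_restrict (iv p) Ob b"
    hence "iv p a = iv p b" by (simp add: perm_restrict_simps)
    hence "p (iv p a) = p (iv p b)" by simp
    thus "a = b" using perm_f_inv[OF assms(1)] by simp
  qed
  show "\<And>x. x \<in> Ob \<Longrightarrow> perm_restrict (iv p) Ob x \<in> Ob"
    using assms(2) orb_inv[OF assms(1), of _ x0] by (auto simp: perm_restrict_def)
  show "\<And>i. i \<notin> Ob \<Longrightarrow> perm_restrict (iv p) Ob i = i"
    by (auto simp: perm_restrict_def)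
qed

lemma revc_permutes:
  assumes "p permutes S" "finite S" "x0 \<in> S" "Ob = orbit p x0"
  shows "revc p Ob permutes S"
proof -
  have pp: "permutation p" using permutes_imp_permutation[OF assms(2,1)] .
  have "Ob \<subseteq> S" using permutes_orbit_subset[OF assms(1,3)] assms(4) by simp
  hence c: "perm_restrict (iv p) Ob permutes S"
    using restr_permutes[OF pp assms(4)] permutes_subset \<open>Ob \<subseteq> S\<close> by blast
  show ?thesis unfolding revc_def
    by (intro permutes_compose c assms(1))
qed

lemma revc_sign:
  assumes "p permutes S" "finite S" "x0 \<in> S" "Ob = orbit p x0"
  shows "sign (revc p Ob) = sign p"
proof -
  have pp: "permutation p" using permutes_imp_permutation[OF assms(2,1)] .
  have "Ob \<subseteq> S" using permutes_orbit_subset[OF assms(1,3)] assms(4) by simp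
  have fo: "finite Ob" using \<open>Ob \<subseteq> S\<close> assms(2) finite_subset by blast
  have c: "permutation (perm_restrict (iv p) Ob)"
    using permutes_imp_permutation[OF fo restr_permutes[OF pp assms(4)]] .
  have "sign (revc p Ob) = sign p * (sign (perm_restrict (iv p) Ob) * sign (perm_restrict (iv p) Ob))"
    unfolding revc_def o_assoc[symmetric]
    by (simp add: sign_compose pp c permutation_compose)
  thus ?thesis by simp
qed

lemma revc_orbit:
  assumes "permutation p" "Ob = orbit p x0"
  shows "orbit (revc p Ob) y = orbit p y"
proof (cases "y \<in> Ob")
  case True
  have r: "\<And>z. z \<in> Ob \<Longrightarrow> revc p Ob z = iv p z" using revc_apply[OF assms] by simp
  have m: "\<And>z. z \<in> Ob \<Longrightarrow> revc p Ob z \<in> Ob"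
    using orb_inv[OF assms(1), of _ x0] assms(2) r by simp
  have "revc p Ob \<in> Ob \<rightarrow> Ob" using m by blast
  from orbit_cong0[OF True this r]
  have "orbit (revc p Ob) y = orbit (iv p) y" .
  also have "\<dots> = orbit p y" using orbit_inv_eq[OF assms(1)] .
  finally show ?thesis .
next
  case False
  have dis: "z \<notin> Ob" if "z \<in> orbit p y" for z
  proof
    assume "z \<in> Ob"
    hence "orbit p z = Ob" using orb_same[OF assms(1), of z x0] assms(2) by simp
    moreover have "orbit p z = orbit p y" using orb_same[OF assms(1) that] .
    ultimately have "y \<in> Ob" using permutation_self_in_orbit[OF assms(1), of y] by simp
    thus False using False by simp
  qed
  have r: "\<And>z. z \<in> orbit p y \<Longrightarrow> revc p Ob z = p z" using revc_apply[OF assms] dis by simp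
  have m: "\<And>z. z \<in> orbit p y \<Longrightarrow> revc p Ob z \<in> orbit p y"
    using orb_p[of _ p y] r by simp
  have "revc p Ob \<in> orbit p y \<rightarrow> orbit p y" using m by blast
  from orbit_cong0[OF permutation_self_in_orbit[OF assms(1)] this r]
  show ?thesis .
qed

lemma revc_revc:
  assumes "permutation p" "Ob = orbit p x0"
  shows "revc (revc p Ob) Ob = p"
proof -
  let ?q = "revc p Ob"
  have qp: "permutation ?q"
  proof -
    have "finite Ob" using finite_orbit[OF permutation_self_in_orbit[OF assms(1)]] assms(2) by simp
    hence "permutation (perm_restrict (iv p) Ob)"
      using restr_permutes[OF assms] permutation_permutes by blast
    thus ?thesis unfolding revc_def using assms(1) by (simp add: permutation_compose)
  qed
  have Ob': "Ob = orbit ?q x0" using revc_orbit[OF assms] assms(2) by simp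
  have iq: "iv ?q y = p y" if "y \<in> Ob" for y
  proof -
    have "p y \<in> Ob" using that assms orb_p[of y p x0] by simp
    hence "?q (p y) = y" using revc_apply[OF assms] perm_inv_f[OF assms(1)] by auto
    thus ?thesis using perm_inv_f[OF qp] by metis
  qed
  show ?thesis
  proof
    fix y
    show "revc ?q Ob y = p y"
      using revc_apply[OF qp Ob', of y] iq revc_apply[OF assms, of y] by auto
  qed
qed


lemma orb_bij:
  fixes p :: "nat \<Rightarrow> nat"
  assumes "permutation p" "Ob = orbit p x0"
  shows "bij_betw p Ob Ob"
proof (rule bij_betw_imageI)
  show "inj_on p Ob" using bij_is_inj[OF permutation_bijective[OF assms(1)]] inj_on_subset by blast
  show "p ` Ob = Ob"
  proof
    show "p ` Ob \<subseteq> Ob" using orb_p[of _ p x0] assms(2) by auto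
    show "Ob \<subseteq> p ` Ob"
    proof
      fix z assume "z \<in> Ob"
      hence "iv p z \<in> Ob" using orb_inv[OF assms(1), of z x0] assms(2) by simp
      moreover have "z = p (iv p z)" using perm_f_inv[OF assms(1)] by simp
      ultimately show "z \<in> p ` Ob" by blast
    qed
  qed
qed

lemma revc_prod:
  fixes a :: "nat \<Rightarrow> nat \<Rightarrow> real"
  assumes "p permutes S" "finite S" "x0 \<in> S" "Ob = orbit p x0" "odd (card Ob)"
    and skew: "\<And>i j. i \<in> S \<Longrightarrow> j \<in> S \<Longrightarrow> a i j = - a j i"
  shows "(\<Prod>i\<in>S. a i (revc p Ob i)) = - (\<Prod>i\<in>S. a i (p i))"
proof -
  have pp: "permutation p" using permutes_imp_permutation[OF assms(2,1)] .
  have sub: "Ob \<subseteq> S" using permutes_orbit_subset[OF assms(1,3)] assms(4) by simp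
  have bij: "bij_betw p Ob Ob" using orb_bij[OF pp assms(4)] .
  have "(\<Prod>i\<in>S. a i (revc p Ob i)) = (\<Prod>i\<in>S - Ob. a i (revc p Ob i)) * (\<Prod>i\<in>Ob. a i (revc p Ob i))"
    using prod.subset_diff[OF sub assms(2)] .
  also have "(\<Prod>i\<in>S - Ob. a i (revc p Ob i)) = (\<Prod>i\<in>S - Ob. a i (p i))"
    by (rule prod.cong) (auto simp: revc_apply[OF pp assms(4)])
  also have "(\<Prod>i\<in>Ob. a i (revc p Ob i)) = (\<Prod>i\<in>Ob. a i (iv p i))"
    by (rule prod.cong) (auto simp: revc_apply[OF pp assms(4)])
  also have "\<dots> = (\<Prod>j\<in>Ob. a (p j) (iv p (p j)))"
    using prod.reindex_bij_betw[OF bij, of "\<lambda>i. a i (iv p i)"] by simp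
  also have "\<dots> = (\<Prod>j\<in>Ob. - a j (p j))"
  proof (rule prod.cong)
    fix j assume j: "j \<in> Ob"
    hence "p j \<in> Ob" using orb_p[of j p x0] assms(4) by simp
    thus "a (p j) (iv p (p j)) = - a j (p j)"
      using perm_inv_f[OF pp] skew j sub by auto
  qed simp
  also have "\<dots> = - (\<Prod>j\<in>Ob. a j (p j))"
    using prod_uminus[of "\<lambda>j. a j (p j)" Ob] assms(5) by simp
  also have "(\<Prod>i\<in>S. a i (p i)) = (\<Prod>i\<in>S - Ob. a i (p i)) * (\<Prod>i\<in>Ob. a i (p i))"
    using prod.subset_diff[OF sub assms(2)] .
  ultimately show ?thesis by simp
qed

lemma sum_cancel:
  fixes f :: "'b \<Rightarrow> real"
  assumes "\<And>p. p \<in> P \<Longrightarrow> \<phi> p \<in> P" "\<And>p. p \<in> P \<Longrightarrow> \<phi> (\<phi> p) = p"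
    "\<And>p. p \<in> P \<Longrightarrow> f (\<phi> p) = - f p"
  shows "sum f P = 0"
proof -
  have "sum f P = sum (\<lambda>p. f (\<phi> p)) P"
    by (rule sum.reindex_bij_witness[of P \<phi> \<phi>]) (use assms in auto)
  also have "\<dots> = - sum f P" using assms(3) by (simp add: sum_negf)
  finally show ?thesis by simp
qed

definition badset :: "(nat \<Rightarrow> nat) \<Rightarrow> nat \<Rightarrow> nat set" where
  "badset p n = {x. x < n \<and> odd (card (orbit p x))}"

definition phi :: "nat \<Rightarrow> (nat \<Rightarrow> nat) \<Rightarrow> nat \<Rightarrow> nat" where
  "phi n p = revc p (orbit p (Min (badset p n)))"

lemma phi_props:
  fixes a :: "nat \<Rightarrow> nat \<Rightarrow> real"
  assumes "p permutes {0..<n}" "badset p n \<noteq> {}"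
    and skew: "\<And>i j. i < n \<Longrightarrow> j < n \<Longrightarrow> a i j = - a j i"
  shows "phi n p permutes {0..<n}" "badset (phi n p) n = badset p n" "phi n (phi n p) = p"
    "of_int (sign (phi n p)) * (\<Prod>i=0..<n. a i (phi n p i)) = - (of_int (sign p) * (\<Prod>i=0..<n. a i (p i)))"
proof -
  have pp: "permutation p" using permutes_imp_permutation[OF _ assms(1)] by simp
  have fb: "finite (badset p n)" unfolding badset_def by simp
  let ?x0 = "Min (badset p n)"
  have x0: "?x0 \<in> badset p n" using Min_in[OF fb assms(2)] .
  hence x0n: "?x0 \<in> {0..<n}" and odd: "odd (card (orbit p ?x0))" unfolding badset_def by auto
  let ?Ob = "orbit p ?x0"
  have q: "phi n p = revc p ?Ob" unfolding phi_def ..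
  show 1: "phi n p permutes {0..<n}" unfolding q by (rule revc_permutes[OF assms(1) _ x0n refl]) simp
  have orb: "\<And>y. orbit (phi n p) y = orbit p y" unfolding q by (rule revc_orbit[OF pp refl])
  show 2: "badset (phi n p) n = badset p n" unfolding badset_def orb ..
  have "phi n (phi n p) = revc (phi n p) (orbit (phi n p) ?x0)"
    unfolding phi_def[of n "phi n p"] 2 ..
  also have "\<dots> = revc (revc p ?Ob) ?Ob" unfolding orb unfolding q ..
  also have "\<dots> = p" by (rule revc_revc[OF pp refl])
  finally show "phi n (phi n p) = p" .
  have "sign (phi n p) = sign p" unfolding q by (rule revc_sign[OF assms(1) _ x0n refl]) simp
  moreover have "(\<Prod>i=0..<n. a i (phi n p i)) = - (\<Prod>i=0..<n. a i (p i))"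
    unfolding q by (rule revc_prod[OF assms(1) _ x0n refl odd]) (auto intro!: skew)
  ultimately show "of_int (sign (phi n p)) * (\<Prod>i=0..<n. a i (phi n p i)) = - (of_int (sign p) * (\<Prod>i=0..<n. a i (p i)))"
    by simp
qed


lemma dist_unique:
  assumes "permutation p" "k < least_power p m" "(p^^k) m = y"
  shows "(LEAST k. (p^^k) m = y) = k"
proof -
  let ?j = "LEAST k. (p^^k) m = y"
  have j1: "(p^^?j) m = y" using LeastI[of "\<lambda>k. (p^^k) m = y" k] assms(3) by blast
  have j2: "?j \<le> k" using Least_le[of "\<lambda>k. (p^^k) m = y" k] assms(3) by blast
  have inj: "inj_on (\<lambda>i. (p^^i) m) {..<least_power p m}"
    using cycle_of_permutation[OF assms(1), of m] by (simp add: distinct_map atLeast_upt)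
  show ?thesis using inj_onD[OF inj, of ?j k] j1 j2 assms(2,3) by simp
qed

lemma even_matching:
  fixes a :: "nat \<Rightarrow> nat \<Rightarrow> real"
  assumes pS: "p permutes {0..<n}" and ev: "\<forall>x<n. even (card (orbit p x))"
   and nz: "\<forall>i<n. a i (p i) \<noteq> 0" and skew: "\<And>i j. i<n \<Longrightarrow> j<n \<Longrightarrow> a i j = - a j i"
  shows "\<exists>\<mu>. \<forall>i<n. \<mu> i < n \<and> \<mu> (\<mu> i) = i \<and> \<mu> i \<noteq> i \<and> a i (\<mu> i) \<noteq> 0"
proof -
  have pp: "permutation p" using permutes_imp_permutation[OF _ pS] by simp
  define m where "m x = Min (orbit p x)" for x
  define d where "d x = (LEAST k. (p^^k) (m x) = x)" for x
  define \<mu> where "\<mu> x = (if even (d x) then p x else iv p x)" for x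
  have key: "m x \<in> orbit p x \<and> card (orbit p x) = least_power p (m x)
     \<and> d x < least_power p (m x) \<and> (p^^(d x)) (m x) = x" for x
  proof -
    have fin: "finite (orbit p x)" using finite_orbit[OF permutation_self_in_orbit[OF pp]] .
    have mx: "m x \<in> orbit p x" unfolding m_def using Min_in[OF fin orbit_nonempty] .
    have oe: "orbit p (m x) = orbit p x" using orb_same[OF pp mx] .
    have card: "card (orbit p x) = least_power p (m x)" using perm_card_orbit[OF pp, of "m x"] oe by simp
    have lp: "(p ^^ least_power p (m x)) (m x) = m x" "least_power p (m x) > 0"
      using least_power_of_permutation[OF pp] by auto
    have "x \<in> orbit p (m x)" using oe permutation_self_in_orbit[OF pp] by simp
    then obtain k where k: "k < least_power p (m x)" "(p^^k) (m x) = x"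
      using orbit_altdef_bounded[OF lp] by auto
    have "d x = k" unfolding d_def using dist_unique[OF pp k] .
    thus ?thesis using mx card k by simp
  qed
  have samem: "m y = m x" if "y \<in> orbit p x" for x y
    unfolding m_def using orb_same[OF pp that] by simp
  have pin: "p x \<in> orbit p x" for x using orb_p[OF permutation_self_in_orbit[OF pp]] .
  have ivin: "iv p x \<in> orbit p x" for x using orb_inv[OF pp permutation_self_in_orbit[OF pp]] .
  have "\<forall>i<n. \<mu> i < n \<and> \<mu> (\<mu> i) = i \<and> \<mu> i \<noteq> i \<and> a i (\<mu> i) \<noteq> 0"
  proof (intro allI impI)
    fix i assume i: "i < n"
    let ?L = "least_power p (m i)"
    have "even (card (orbit p i))" using ev i by simp
    hence evL: "even ?L" using key[of i] by simp
    have pi_ne: "p i \<noteq> i"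
    proof
      assume "p i = i"
      hence "orbit p i = {i}" using orbit_eq_singleton_iff by metis
      moreover have "even (card (orbit p i))" using ev i by blast
      ultimately show False by simp
    qed
    have pin_n: "p i < n" using permutes_in_image[OF pS, of i] i by simp
    have ivp: "iv p permutes {0..<n}" using permutes_inv[OF pS] .
    have ivn: "iv p i < n" using permutes_in_image[OF ivp, of i] i by simp
    have iv_ne: "iv p i \<noteq> i" using pi_ne perm_f_inv[OF pp, of i] by metis
    show "\<mu> i < n \<and> \<mu> (\<mu> i) = i \<and> \<mu> i \<noteq> i \<and> a i (\<mu> i) \<noteq> 0"
    proof (cases "even (d i)")
      case True
      have di: "d i < ?L" "(p^^(d i)) (m i) = i" using key[of i] by auto
      have lt: "Suc (d i) < ?L" using di(1) True evL
        by (metis Suc_lessI even_Suc)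
      have e1: "(p^^(Suc (d i))) (m i) = p i" using di(2) by simp
      have mp: "m (p i) = m i" using samem[OF pin] .
      have "d (p i) = (LEAST k. (p^^k) (m i) = p i)" unfolding d_def mp ..
      also have "\<dots> = Suc (d i)" using dist_unique[OF pp lt e1] .
      finally have "d (p i) = Suc (d i)" .
      hence "\<mu> (p i) = i" unfolding \<mu>_def using True perm_inv_f[OF pp] by simp
      moreover have "\<mu> i = p i" unfolding \<mu>_def using True by simp
      ultimately show ?thesis using pin_n pi_ne nz i by simp
    next
      case False
      have di: "d i < ?L" "(p^^(d i)) (m i) = i" using key[of i] by auto
      have "d i \<noteq> 0" using False by (metis even_zero)
      then obtain k where k: "d i = Suc k" using not0_implies_Suc by blast
      have lt: "k < ?L" using di(1) k by simp
      have "(p^^(Suc k)) (m i) = i" using di(2) k by simp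
      hence "p ((p^^k) (m i)) = i" by simp
      hence "iv p (p ((p^^k) (m i))) = iv p i" by simp
      hence e: "(p^^k) (m i) = iv p i" using perm_inv_f[OF pp] by simp
      have mp: "m (iv p i) = m i" using samem[OF ivin] .
      have "d (iv p i) = (LEAST j. (p^^j) (m i) = iv p i)" unfolding d_def mp ..
      also have "\<dots> = k" using dist_unique[OF pp lt e] .
      finally have "even (d (iv p i))" using False k by simp
      hence "\<mu> (iv p i) = i" unfolding \<mu>_def using perm_f_inv[OF pp] by simp
      moreover have "\<mu> i = iv p i" unfolding \<mu>_def using False by simp
      moreover have "a i (iv p i) \<noteq> 0"
      proof -
        have "a i (iv p i) = - a (iv p i) (p (iv p i))" using skew[OF i ivn] perm_f_inv[OF pp] by simp
        moreover have "a (iv p i) (p (iv p i)) \<noteq> 0" using nz ivn by blast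
        ultimately show ?thesis by simp
      qed
      ultimately show ?thesis using ivn iv_ne by simp
    qed
  qed
  thus ?thesis by blast
qed

lemma skew_matching:
  fixes a :: "nat \<Rightarrow> nat \<Rightarrow> real"
  assumes skew: "\<And>i j. i<n \<Longrightarrow> j<n \<Longrightarrow> a i j = - a j i"
  and nz: "(\<Sum>p | p permutes {0..<n}. of_int (sign p) * (\<Prod>i=0..<n. a i (p i))) \<noteq> 0"
  shows "\<exists>\<mu>. \<forall>i<n. \<mu> i < n \<and> \<mu> (\<mu> i) = i \<and> \<mu> i \<noteq> i \<and> a i (\<mu> i) \<noteq> 0"
proof -
  let ?P = "{p. p permutes {0..<n}}"
  let ?f = "\<lambda>p. of_int (sign p) * (\<Prod>i=0..<n. a i (p i)) :: real"
  let ?G = "{p. badset p n = {}}"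
  have split: "sum ?f ?P = sum ?f (?P \<inter> ?G) + sum ?f (?P - ?G)"
    by (rule sum.Int_Diff) (simp add: finite_permutations)
  have bad0: "sum ?f (?P - ?G) = 0"
  proof (rule sum_cancel[where \<phi> = "phi n"])
    fix p assume "p \<in> ?P - ?G"
    hence p: "p permutes {0..<n}" "badset p n \<noteq> {}" by auto
    note props = phi_props[OF p skew]
    show "phi n p \<in> ?P - ?G" using props(1,2) p by auto
    show "phi n (phi n p) = p" using props(3) .
    show "?f (phi n p) = - ?f p" using props(4) .
  qed
  have "sum ?f (?P \<inter> ?G) \<noteq> 0" using nz split bad0 by simp
  hence "\<exists>p\<in>?P \<inter> ?G. ?f p \<noteq> 0" by (meson sum.neutral)
  then obtain p where p: "p \<in> ?P \<inter> ?G" "?f p \<noteq> 0" by blast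
  have pr: "(\<Prod>i=0..<n. a i (p i)) \<noteq> 0" using p(2) by (metis mult_zero_right)
  have nz': "\<forall>i<n. a i (p i) \<noteq> 0"
  proof (intro allI impI)
    fix i assume "i < n"
    thus "a i (p i) \<noteq> 0" using pr prod_zero_iff[of "{0..<n}" "\<lambda>i. a i (p i)"] by auto
  qed
  have pS: "p permutes {0..<n}" using p(1) by simp
  have "badset p n = {}" using p(1) by simp
  hence ev: "\<forall>x<n. even (card (orbit p x))" unfolding badset_def by auto
  show ?thesis using even_matching[OF pS ev nz' skew] by blast
qed




locale GS =
  fixes nv ne :: nat and ed :: "nat \<Rightarrow> nat \<times> nat" and rho :: nat and C :: "nat set"
  assumes eg: "edge_graph nv ne ed" and rho: "rho \<in> {1..nv}" and Csub: "C \<subseteq> {1..ne}"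
begin

abbreviation "inc \<equiv> incidence_mat nv ne ed"
abbreviation "Lap \<equiv> laplacian_mat nv ne ed"
definition "I = (\<lambda>e. e - 1) ` C"
definition "J = {0..<nv} - {rho - 1}"
abbreviation "c \<equiv> card C"
abbreviation "N \<equiv> card C + (nv - 1)"
abbreviation "M \<equiv> block_mat nv ne ed C rho"

lemma edge_props: "e \<in> {1..ne} \<Longrightarrow> 1 \<le> fst (ed e) \<and> fst (ed e) < snd (ed e) \<and> snd (ed e) \<le> nv"
  using eg unfolding edge_graph_def by blast

lemma ed_inj: "inj_on ed {1..ne}" using eg unfolding edge_graph_def by blast

lemma inc_dim[simp]: "dim_row inc = ne" "dim_col inc = nv"
  unfolding incidence_mat_def by simp_all

lemma inc_entry: "r < ne \<Longrightarrow> x < nv \<Longrightarrow> inc $$ (r, x) =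
   (if Suc x = fst (ed (Suc r)) then 1 else if Suc x = snd (ed (Suc r)) then -1 else 0)"
  unfolding incidence_mat_def by simp

lemma Lap_dim[simp]: "dim_row Lap = nv" "dim_col Lap = nv"
  unfolding laplacian_mat_def by simp_all

lemma Lap_entry: "x < nv \<Longrightarrow> y < nv \<Longrightarrow> Lap $$ (x, y) = (\<Sum>r<ne. inc $$ (r, x) * inc $$ (r, y))"
  unfolding laplacian_mat_def by (simp add: scalar_prod_def lessThan_atLeast0)

lemma C_ge: "e \<in> C \<Longrightarrow> 1 \<le> e \<and> e \<le> ne" using Csub by auto

lemma I_sub: "I \<subseteq> {0..<ne}" unfolding I_def using C_ge by fastforce

lemma I_set: "{i. i < ne \<and> i \<in> I} = I" using I_sub by auto

lemma inj_m1: "inj_on (\<lambda>e::nat. e - 1) C"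
proof (rule inj_onI)
  fix x y assume "x \<in> C" "y \<in> C" "x - (1::nat) = y - 1"
  thus "x = y" using C_ge[of x] C_ge[of y] by linarith
qed

lemma card_I: "card I = c" unfolding I_def using card_image[OF inj_m1] .

lemma finite_C: "finite C" using Csub finite_subset by blast

lemma J_set: "{j. j < nv \<and> j \<in> J} = J" unfolding J_def by auto

lemma card_J: "card J = nv - 1"
proof -
  have "rho - 1 \<in> {0..<nv}" using rho by auto
  thus ?thesis unfolding J_def by (simp add: card_Diff_singleton)
qed

definition "B = B_C_rho nv ne ed C rho"
definition "L' = L_rho_rho nv ne ed rho"

lemma B_dim[simp]: "dim_row B = c" "dim_col B = nv - 1"
  unfolding B_def B_C_rho_def I_def[symmetric] J_def[symmetric]
  by (simp_all add: dim_submatrix I_set card_I J_set card_J)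

lemma B_entry: "i < c \<Longrightarrow> j < nv - 1 \<Longrightarrow> B $$ (i, j) = inc $$ (pick I i, pick J j)"
  unfolding B_def B_C_rho_def I_def[symmetric] J_def[symmetric]
  by (rule submatrix_index) (simp_all add: I_set card_I J_set card_J)

lemma L'_dim[simp]: "dim_row L' = nv - 1" "dim_col L' = nv - 1"
  unfolding L'_def L_rho_rho_def J_def[symmetric]
  by (simp_all add: dim_submatrix J_set card_J)

lemma L'_entry: "k < nv - 1 \<Longrightarrow> l < nv - 1 \<Longrightarrow> L' $$ (k, l) = Lap $$ (pick J k, pick J l)"
  unfolding L'_def L_rho_rho_def J_def[symmetric]
  by (rule submatrix_index) (simp_all add: J_set card_J)

lemma skew_dim: "dim_row A = n \<Longrightarrow> dim_col A = n \<Longrightarrow> dim_row (skew A) = n \<and> dim_col (skew A) = n"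
  unfolding skew_def triu_def by simp

lemma skew_entry: "dim_row A = n \<Longrightarrow> dim_col A = n \<Longrightarrow> k < n \<Longrightarrow> l < n \<Longrightarrow>
   skew A $$ (k, l) = (if k \<le> l then A $$ (k, l) else 0) - (if l \<le> k then A $$ (l, k) else 0)"
  unfolding skew_def triu_def by simp

lemma M_eq: "M = four_block_mat (0\<^sub>m c c) B (- transpose_mat B) (skew L')"
  unfolding block_mat_def B_def L'_def ..

lemma M_carrier: "M \<in> carrier_mat N N"
  unfolding M_eq carrier_mat_def using skew_dim[OF L'_dim] by simp

lemma M_entry: "i < N \<Longrightarrow> j < N \<Longrightarrow> M $$ (i, j) =
  (if i < c then (if j < c then 0 else B $$ (i, j - c))
   else if j < c then - B $$ (j, i - c) else skew L' $$ (i - c, j - c))"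
  unfolding M_eq using skew_dim[OF L'_dim] by simp

lemma M_skew: assumes "i < N" "j < N" shows "M $$ (i, j) = - M $$ (j, i)"
proof -
  have e1: "M $$ (i, j) = (if i < c then (if j < c then 0 else B $$ (i, j - c))
   else if j < c then - B $$ (j, i - c) else skew L' $$ (i - c, j - c))" using M_entry assms by blast
  have e2: "M $$ (j, i) = (if j < c then (if i < c then 0 else B $$ (j, i - c))
   else if i < c then - B $$ (i, j - c) else skew L' $$ (j - c, i - c))" using M_entry assms by blast
  show ?thesis
  proof (cases "i < c \<or> j < c")
    case True thus ?thesis unfolding e1 e2 by auto
  next
    case False
    hence k: "i - c < nv - 1" "j - c < nv - 1" using assms by auto
    show ?thesis unfolding e1 e2 using False skew_entry[OF L'_dim k] skew_entry[OF L'_dim k(2,1)] by auto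
  qed
qed


definition "E i = Suc (pick I i)"
definition "V j = Suc (pick J j)"
definition "ei e = card {a\<in>I. a < e - 1}"
definition "vi v = card {a\<in>J. a < v - 1}"

lemma finite_I: "finite I" using I_sub finite_subset by blast
lemma finite_J: "finite J" unfolding J_def by simp

lemma E_in: "i < c \<Longrightarrow> E i \<in> C"
proof -
  assume "i < c"
  hence "pick I i \<in> I" using pick_in_set_le card_I by simp
  then obtain e where "e \<in> C" "pick I i = e - 1" unfolding I_def by blast
  thus "E i \<in> C" unfolding E_def using C_ge[of e] by simp
qed

lemma E_inj: "i < c \<Longrightarrow> j < c \<Longrightarrow> E i = E j \<Longrightarrow> i = j"
  unfolding E_def using pick_mono_le[of _ I] card_I by (metis Suc_inject nat_neq_iff)

lemma ei_props: assumes "e \<in> C" shows "ei e < c" "E (ei e) = e"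
proof -
  have e1: "e - 1 \<in> I" unfolding I_def using assms by blast
  have "{a\<in>I. a < e - 1} \<subset> I" using e1 by auto
  thus "ei e < c" unfolding ei_def using psubset_card_mono[OF finite_I] card_I by simp
  show "E (ei e) = e" unfolding E_def ei_def pick_card_in_set[OF e1] using C_ge[OF assms] by simp
qed

lemma ei_E: "i < c \<Longrightarrow> ei (E i) = i"
  unfolding ei_def E_def using card_pick_le[of i I] card_I by simp

lemma V_in: "j < nv - 1 \<Longrightarrow> V j \<in> {1..nv} \<and> V j \<noteq> rho"
proof -
  assume "j < nv - 1"
  hence "pick J j \<in> J" using pick_in_set_le card_J by simp
  thus ?thesis unfolding V_def J_def using rho by auto
qed

lemma V_inj: "i < nv - 1 \<Longrightarrow> j < nv - 1 \<Longrightarrow> V i = V j \<Longrightarrow> i = j"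
  unfolding V_def using pick_mono_le[of _ J] card_J by (metis Suc_inject nat_neq_iff)

lemma vi_props: assumes "v \<in> {1..nv}" "v \<noteq> rho" shows "vi v < nv - 1" "V (vi v) = v"
proof -
  have e1: "v - 1 \<in> J" unfolding J_def using assms rho by auto
  have "{a\<in>J. a < v - 1} \<subset> J" using e1 by auto
  thus "vi v < nv - 1" unfolding vi_def using psubset_card_mono[OF finite_J] card_J by simp
  show "V (vi v) = v" unfolding V_def vi_def pick_card_in_set[OF e1] using assms by simp
qed

lemma vi_V: "j < nv - 1 \<Longrightarrow> vi (V j) = j"
  unfolding vi_def V_def using card_pick_le[of j J] card_J by simp

lemma pickI_lt: "i < c \<Longrightarrow> pick I i < ne"
  using pick_in_set_le[of i I] card_I I_sub by auto

lemma pickJ_lt: "j < nv - 1 \<Longrightarrow> pick J j < nv"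
  using pick_in_set_le[of j J] card_J unfolding J_def by auto

lemma B_nz: assumes "i < c" "j < nv - 1" "B $$ (i, j) \<noteq> 0"
  shows "V j = fst (ed (E i)) \<or> V j = snd (ed (E i))"
  using assms B_entry[OF assms(1,2)] inc_entry[OF pickI_lt[OF assms(1)] pickJ_lt[OF assms(2)]]
  unfolding V_def E_def by (auto split: if_splits)

lemma joins_sym: "joins ed e u v = joins ed e v u" unfolding joins_def by auto

lemma Lap_nz: assumes "x < nv" "y < nv" "x \<noteq> y" "Lap $$ (x, y) \<noteq> 0"
  shows "\<exists>e\<in>{1..ne}. joins ed e (Suc x) (Suc y)"
proof -
  have "(\<Sum>r<ne. inc $$ (r, x) * inc $$ (r, y)) \<noteq> 0" using assms Lap_entry by simp
  then obtain r where r: "r < ne" "inc $$ (r, x) * inc $$ (r, y) \<noteq> 0"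
    by (meson lessThan_iff sum.neutral)
  hence "inc $$ (r, x) \<noteq> 0" "inc $$ (r, y) \<noteq> 0" by auto
  hence "Suc x = fst (ed (Suc r)) \<or> Suc x = snd (ed (Suc r))"
        "Suc y = fst (ed (Suc r)) \<or> Suc y = snd (ed (Suc r))"
    using inc_entry[OF r(1) assms(1)] inc_entry[OF r(1) assms(2)] by (auto split: if_splits)
  hence "joins ed (Suc r) (Suc x) (Suc y)" using assms(3) unfolding joins_def
    by (metis Suc_inject prod.collapse)
  thus ?thesis using r(1) by auto
qed

lemma S_nz: assumes "k < nv - 1" "l < nv - 1" "k \<noteq> l" "skew L' $$ (k, l) \<noteq> 0"
  shows "\<exists>e\<in>{1..ne}. joins ed e (V k) (V l)"
proof -
  have pk: "pick J k < nv" "pick J l < nv" using pickJ_lt assms by auto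
  have ne: "pick J k \<noteq> pick J l" using V_inj assms unfolding V_def by auto
  have "skew L' $$ (k, l) = (if k \<le> l then L' $$ (k, l) else 0) - (if l \<le> k then L' $$ (l, k) else 0)"
    using skew_entry[OF L'_dim assms(1,2)] .
  hence "L' $$ (k, l) \<noteq> 0 \<or> L' $$ (l, k) \<noteq> 0" using assms(4) by (auto split: if_splits)
  thus ?thesis
  proof
    assume "L' $$ (k, l) \<noteq> 0"
    hence "Lap $$ (pick J k, pick J l) \<noteq> 0" using L'_entry assms by simp
    thus ?thesis using Lap_nz[OF pk ne] unfolding V_def by blast
  next
    assume "L' $$ (l, k) \<noteq> 0"
    hence "Lap $$ (pick J l, pick J k) \<noteq> 0" using L'_entry assms by simp
    thus ?thesis using Lap_nz[OF pk(2,1) ne[symmetric]] joins_sym unfolding V_def by blast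
  qed
qed

end


lemma funpow_fixed: "f x = x \<Longrightarrow> (f ^^ n) x = x"
  by (induction n) auto

lemma joins_ends: "joins ed d a b \<Longrightarrow> ((fst (ed d) \<in> K \<and> snd (ed d) \<in> K) \<longleftrightarrow> (a \<in> K \<and> b \<in> K))
   \<and> (touches ed d K \<longleftrightarrow> (a \<in> K \<or> b \<in> K))"
  unfolding joins_def touches_def by auto

locale GM = GS +
  fixes \<mu> :: "nat \<Rightarrow> nat"
  assumes mu: "\<And>i. i < N \<Longrightarrow> \<mu> i < N \<and> \<mu> (\<mu> i) = i \<and> \<mu> i \<noteq> i \<and> M $$ (i, \<mu> i) \<noteq> 0"
  and nocyc: "\<not> has_cycle ed C"
begin

definition "cov v \<longleftrightarrow> v \<in> {1..nv} \<and> v \<noteq> rho \<and> \<mu> (c + vi v) < c"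
definition "U = {v \<in> {1..nv}. v \<noteq> rho \<and> \<not> \<mu> (c + vi v) < c}"
definition "ce v = E (\<mu> (c + vi v))"
definition "oth e v = (if fst (ed e) = v then snd (ed e) else fst (ed e))"
definition "g v = (if cov v then oth (ce v) v else v)"
definition "pu v = V (\<mu> (c + vi v) - c)"
definition "sink v = (g ^^ nv) v"

lemma L1: assumes "i < c" shows "c \<le> \<mu> i" "\<mu> i - c < nv - 1"
  "V (\<mu> i - c) = fst (ed (E i)) \<or> V (\<mu> i - c) = snd (ed (E i))"
proof -
  have iN: "i < N" using assms by simp
  note m = mu[OF iN]
  show ge: "c \<le> \<mu> i"
  proof (rule ccontr)
    assume "\<not> c \<le> \<mu> i"
    hence "M $$ (i, \<mu> i) = 0" using M_entry[OF iN] m assms by simp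
    thus False using m by simp
  qed
  show lt: "\<mu> i - c < nv - 1" using m ge by linarith
  have "M $$ (i, \<mu> i) = B $$ (i, \<mu> i - c)" using M_entry[OF iN] m assms ge by simp
  hence "B $$ (i, \<mu> i - c) \<noteq> 0" using m by simp
  thus "V (\<mu> i - c) = fst (ed (E i)) \<or> V (\<mu> i - c) = snd (ed (E i))"
    using B_nz[OF assms lt] by simp
qed

lemma E_edge: "i < c \<Longrightarrow> E i \<in> {1..ne}" using E_in Csub by blast

lemma L2: assumes "cov v"
  shows "ce v \<in> C" "joins ed (ce v) v (g v)" "g v \<noteq> v" "g v \<in> {1..nv}" "v \<in> {1..nv}"
proof -
  have v: "v \<in> {1..nv}" "v \<noteq> rho" and i: "\<mu> (c + vi v) < c" using assms unfolding cov_def by auto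
  let ?i = "\<mu> (c + vi v)"
  have vl: "vi v < nv - 1" "V (vi v) = v" using vi_props v by auto
  have kN: "c + vi v < N" using vl by simp
  have mi: "\<mu> ?i = c + vi v" using mu[OF kN] by simp
  have ep: "v = fst (ed (E ?i)) \<or> v = snd (ed (E ?i))" using L1(3)[OF i] mi vl by simp
  show "ce v \<in> C" unfolding ce_def using E_in[OF i] .
  have ed: "E ?i \<in> {1..ne}" using E_edge[OF i] .
  have lt: "fst (ed (E ?i)) < snd (ed (E ?i))" "1 \<le> fst (ed (E ?i))" "snd (ed (E ?i)) \<le> nv"
    using edge_props[OF ed] by auto
  have gv: "g v = oth (E ?i) v" unfolding g_def ce_def using assms by simp
  show "joins ed (ce v) v (g v)" unfolding gv ce_def oth_def joins_def using ep by (auto simp: prod_eq_iff)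
  show "g v \<noteq> v" unfolding gv oth_def using ep lt by auto
  show "g v \<in> {1..nv}" unfolding gv oth_def using lt by auto
  show "v \<in> {1..nv}" using v by simp
qed

lemma L3: assumes "e \<in> C" shows "\<exists>v. cov v \<and> ce v = e"
proof -
  let ?i = "ei e"
  have i: "?i < c" "E ?i = e" using ei_props[OF assms] by auto
  let ?j = "\<mu> ?i - c"
  have j: "c \<le> \<mu> ?i" "?j < nv - 1" using L1[OF i(1)] by auto
  let ?v = "V ?j"
  have v: "?v \<in> {1..nv}" "?v \<noteq> rho" using V_in[OF j(2)] by auto
  have vi: "vi ?v = ?j" using vi_V[OF j(2)] .
  have "c + vi ?v = \<mu> ?i" using vi j by simp
  hence mm: "\<mu> (c + vi ?v) = ?i" using mu[of ?i] i by simp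
  have "cov ?v" unfolding cov_def using v mm i by simp
  moreover have "ce ?v = e" unfolding ce_def mm using i by simp
  ultimately show ?thesis by blast
qed

lemma L4: assumes "cov v" "cov w" "ce v = ce w" shows "v = w"
proof -
  have v: "v \<in> {1..nv}" "v \<noteq> rho" "\<mu> (c + vi v) < c" using assms(1) unfolding cov_def by auto
  have w: "w \<in> {1..nv}" "w \<noteq> rho" "\<mu> (c + vi w) < c" using assms(2) unfolding cov_def by auto
  have "\<mu> (c + vi v) = \<mu> (c + vi w)" using E_inj[OF v(3) w(3)] assms(3) unfolding ce_def by simp
  hence "\<mu> (\<mu> (c + vi v)) = \<mu> (\<mu> (c + vi w))" by simp
  moreover have "vi v < nv - 1" "vi w < nv - 1" using vi_props v w by auto
  ultimately have "c + vi v = c + vi w" using mu[of "c + vi v"] mu[of "c + vi w"] by simp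
  hence "V (vi v) = V (vi w)" by simp
  thus "v = w" using vi_props v w by simp
qed

lemma L5: "v \<in> {1..nv} \<Longrightarrow> g v \<in> {1..nv}"
  using L2(4) unfolding g_def by (cases "cov v") auto

lemma L5n: assumes "v \<in> {1..nv}" shows "(g ^^ n) v \<in> {1..nv}"
proof (induction n)
  case 0 thus ?case using assms by simp
next
  case (Suc n) thus ?case using L5[OF Suc.IH] by simp
qed

lemma L6: assumes "v \<in> U"
  shows "pu v \<in> U" "pu v \<noteq> v" "pu (pu v) = v" "\<exists>e\<in>{1..ne}. joins ed e v (pu v)"
proof -
  have v: "v \<in> {1..nv}" "v \<noteq> rho" "\<not> \<mu> (c + vi v) < c" using assms unfolding U_def by auto
  have vl: "vi v < nv - 1" "V (vi v) = v" using vi_props v by auto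
  let ?k = "c + vi v"
  have kN: "?k < N" using vl by simp
  note mk = mu[OF kN]
  let ?j = "\<mu> ?k - c"
  have j: "?j < nv - 1" using mk v by linarith
  have w: "pu v \<in> {1..nv}" "pu v \<noteq> rho" unfolding pu_def using V_in[OF j] by auto
  have viw: "vi (pu v) = ?j" unfolding pu_def using vi_V[OF j] .
  have cw: "c + vi (pu v) = \<mu> ?k" using viw v by simp
  have mw: "\<mu> (c + vi (pu v)) = ?k" using cw mk by simp
  show "pu v \<in> U" unfolding U_def using w mw by simp
  show "pu (pu v) = v" unfolding pu_def[of "pu v"] mw using vl by simp
  show ne: "pu v \<noteq> v"
  proof
    assume "pu v = v"
    hence "?j = vi v" using viw by simp
    hence "\<mu> ?k = ?k" using v by linarith
    thus False using mk by simp
  qed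
  have jne: "vi v \<noteq> ?j"
  proof
    assume "vi v = ?j"
    hence "V (vi (pu v)) = V (vi v)" using viw by simp
    thus False using ne vi_props[OF w] vl by simp
  qed
  have "M $$ (?k, \<mu> ?k) = skew L' $$ (vi v, ?j)" using M_entry[OF kN] mk v by simp
  hence "skew L' $$ (vi v, ?j) \<noteq> 0" using mk by simp
  from S_nz[OF vl(1) j jne this]
  show "\<exists>e\<in>{1..ne}. joins ed e v (pu v)" using vl unfolding pu_def by simp
qed

lemma U_not_cov: "v \<in> U \<Longrightarrow> \<not> cov v" unfolding U_def cov_def by auto

lemma g_fix: "\<not> cov v \<Longrightarrow> g v = v" unfolding g_def by simp

lemma S4: "(v, (g ^^ k) v) \<in> (adj_rel ed C)\<^sup>*"
proof (induction k)
  case 0 thus ?case by simp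
next
  case (Suc k)
  let ?x = "(g ^^ k) v"
  have "(?x, g ?x) \<in> (adj_rel ed C)\<^sup>*"
  proof (cases "cov ?x")
    case True
    hence "(?x, g ?x) \<in> adj_rel ed C" unfolding adj_rel_def using L2[OF True] by blast
    thus ?thesis by blast
  next
    case False thus ?thesis using g_fix by simp
  qed
  thus ?case using Suc by simp
qed


lemma S1: assumes "v \<in> {1..nv}" shows "g (sink v) = sink v"
proof (rule ccontr)
  assume nf: "g (sink v) \<noteq> sink v"
  define h where "h k = (g^^k) v" for k
  have hin: "h k \<in> {1..nv}" for k unfolding h_def using L5n[OF assms] .
  have A: "g (h k) \<noteq> h k" if "k \<le> nv" for k
  proof
    assume fx: "g (h k) = h k"
    have "h nv = (g^^(nv - k + k)) v" unfolding h_def using that by simp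
    also have "\<dots> = (g^^(nv - k)) (h k)" unfolding h_def funpow_add by simp
    also have "\<dots> = h k" using funpow_fixed[where f=g and x="h k", OF fx] .
    finally have "g (h nv) = h nv" using fx by simp
    thus False using nf unfolding sink_def h_def by simp
  qed
  have "\<not> inj_on h {0..nv}"
  proof
    assume inj: "inj_on h {0..nv}"
    have c1: "card (h ` {0..nv}) = nv + 1" using card_image[OF inj] by simp
    have "h ` {0..nv} \<subseteq> {1..nv}" using hin by auto
    hence "card (h ` {0..nv}) \<le> card {1..nv}" by (intro card_mono) auto
    thus False using c1 by simp
  qed
  then obtain x y where xy: "x \<in> {0..nv}" "y \<in> {0..nv}" "h x = h y" "x \<noteq> y"
    unfolding inj_on_def by blast
  obtain a b where ab: "a < b" "b \<le> nv" "h a = h b"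
  proof (cases "x < y")
    case True thus ?thesis using xy that[of x y] by auto
  next
    case False hence "y < x" using xy(4) by simp
    thus ?thesis using xy that[of y x] by auto
  qed
  define w where "w = h a"
  define P where "P = b - a"
  have P0: "P > 0" unfolding P_def using ab by simp
  have hb: "h b = (g^^P) w"
  proof -
    have "h b = (g^^(P + a)) v" unfolding h_def P_def using ab by simp
    thus ?thesis unfolding w_def h_def funpow_add by simp
  qed
  have Pw: "(g^^P) w = w" using hb ab unfolding w_def by simp
  have nfw: "g ((g^^k) w) \<noteq> (g^^k) w" for k
  proof -
    have "(g^^k) w = (g^^(k mod P)) w" using funpow_mod_eq[where f=g and n=P and x=w and m=k, OF Pw] by simp
    also have "\<dots> = h (k mod P + a)" unfolding w_def h_def funpow_add by simp
    finally have e: "(g^^k) w = h (k mod P + a)" .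
    have "k mod P < P" using P0 by simp
    hence "k mod P + a \<le> nv" unfolding P_def using ab by linarith
    thus ?thesis using A e by simp
  qed
  have covk: "cov ((g^^k) w)" for k using g_fix nfw by blast
  define L where "L = least_power g w"
  have L: "(g^^L) w = w" "L > 0" using least_powerI[OF Pw P0] unfolding L_def by auto
  have Lmin: "L \<le> m" if "0 < m" "(g^^m) w = w" for m
    using least_power_le[OF that(2) that(1)] unfolding L_def .
  have H: False if "x' < y'" "y' < L" "(g^^x') w = (g^^y') w" for x' y'
  proof -
    have "(g^^(L - y' + x')) w = (g^^(L - y')) ((g^^x') w)" unfolding funpow_add by simp
    also have "\<dots> = (g^^(L - y')) ((g^^y') w)" using that(3) by simp
    also have "\<dots> = (g^^(L - y' + y')) w" unfolding funpow_add by simp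
    also have "\<dots> = w" using L(1) that(2) by simp
    finally have "L \<le> L - y' + x'" using Lmin that by simp
    thus False using that by simp
  qed
  have dist: "inj_on (\<lambda>k. (g^^k) w) {0..<L}"
  proof (rule inj_onI)
    fix x y assume xy: "x \<in> {0..<L}" "y \<in> {0..<L}" "(g^^x) w = (g^^y) w"
    show "x = y"
    proof (rule ccontr)
      assume "x \<noteq> y"
      hence "x < y \<or> y < x" by arith
      thus False using H[of x y] H[of y x] xy by auto
    qed
  qed
  have dist2: "inj_on (\<lambda>k. ce ((g^^k) w)) {0..<L}"
  proof (rule inj_onI)
    fix x y assume xy: "x \<in> {0..<L}" "y \<in> {0..<L}" "ce ((g^^x) w) = ce ((g^^y) w)"
    hence "(g^^x) w = (g^^y) w" using L4[OF covk covk] by blast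
    thus "x = y" using inj_onD[OF dist] xy by blast
  qed
  define vs where "vs = map (\<lambda>k. (g^^k) w) [0..<L]"
  define es where "es = map (\<lambda>k. ce ((g^^k) w)) [0..<L]"
  have "has_cycle ed C" unfolding has_cycle_def
  proof (intro exI conjI)
    show "es \<noteq> []" unfolding es_def using L by simp
    show "length vs = length es" unfolding vs_def es_def by simp
    show "distinct es" unfolding es_def using dist2 by (simp add: distinct_map)
    show "distinct vs" unfolding vs_def using dist by (simp add: distinct_map)
    show "set es \<subseteq> C" unfolding es_def using L2(1)[OF covk] by auto
    show "\<forall>k<length es. joins ed (es ! k) (vs ! k) (vs ! ((k + 1) mod length es))"
    proof (intro allI impI)
      fix k assume k: "k < length es"
      hence kL: "k < L" unfolding es_def by simp
      have m: "(k + 1) mod L < L" using L by simp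
      have "vs ! ((k + 1) mod length es) = (g^^((k + 1) mod L)) w"
        unfolding vs_def es_def using m by simp
      also have "\<dots> = (g^^(k+1)) w" using funpow_mod_eq[where f=g and n=L and x=w and m="k+1", OF L(1)] .
      also have "\<dots> = g ((g^^k) w)" by simp
      finally have e3: "vs ! ((k + 1) mod length es) = g ((g^^k) w)" .
      have e1: "es ! k = ce ((g^^k) w)" unfolding es_def using kL by simp
      have e2: "vs ! k = (g^^k) w" unfolding vs_def using kL by simp
      show "joins ed (es ! k) (vs ! k) (vs ! ((k + 1) mod length es))"
        unfolding e1 e2 e3 using L2(2)[OF covk] .
    qed
  qed
  thus False using nocyc by simp
qed

lemma joins_same: "joins ed e x y \<Longrightarrow> joins ed e a b \<Longrightarrow> (x = a \<and> y = b) \<or> (x = b \<and> y = a)"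
  unfolding joins_def by auto

lemma sink_g: assumes "v \<in> {1..nv}" shows "sink (g v) = sink v"
proof -
  have "sink (g v) = g ((g^^nv) v)" unfolding sink_def funpow_swap1 ..
  also have "\<dots> = sink v" using S1[OF assms] unfolding sink_def .
  finally show ?thesis .
qed

lemma S2: assumes "(x, y) \<in> adj_rel ed C" shows "sink x = sink y"
proof -
  obtain e where e: "e \<in> C" "joins ed e x y" using assms unfolding adj_rel_def by blast
  obtain v where v: "cov v" "ce v = e" using L3[OF e(1)] by blast
  have j: "joins ed e v (g v)" using L2(2)[OF v(1)] v(2) by simp
  have sg: "sink (g v) = sink v" using sink_g[OF L2(5)[OF v(1)]] .
  show ?thesis using joins_same[OF e(2) j] sg by auto
qed

lemma S3: assumes "(u, v) \<in> (adj_rel ed C)\<^sup>*" shows "sink u = sink v"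
  using assms
proof (induction rule: rtrancl_induct)
  case base thus ?case by simp
next
  case (step y z) thus ?case using S2[OF step(2)] by simp
qed

lemma sink_fixed_pt: "\<not> cov v \<Longrightarrow> sink v = v"
  unfolding sink_def using funpow_fixed[where f=g and x=v, OF g_fix] by blast

lemma rho_not_cov: "\<not> cov rho" unfolding cov_def by simp

lemma comp_facts:
  assumes K: "K \<in> components nv ed C"
  shows "\<exists>s. s \<in> K \<and> U \<inter> K \<subseteq> {s} \<and> (rho \<in> K \<longrightarrow> s = rho) \<and> (rho \<notin> K \<longrightarrow> s \<in> U)"
proof -
  obtain u where u: "u \<in> {1..nv}" "K = {v\<in>{1..nv}. (u, v) \<in> (adj_rel ed C)\<^sup>*}"
    using K unfolding components_def by blast
  let ?s = "sink u"
  have sK: "?s \<in> K" unfolding u(2) sink_def using L5n[OF u(1)] S4 by simp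
  have sv: "sink v = ?s" if "v \<in> K" for v using S3[of u v] that u(2) by simp
  have UK: "U \<inter> K \<subseteq> {?s}"
  proof
    fix v assume v: "v \<in> U \<inter> K"
    hence "sink v = v" using sink_fixed_pt U_not_cov by blast
    thus "v \<in> {?s}" using sv v by simp
  qed
  have r1: "?s = rho" if "rho \<in> K" using sv[OF that] sink_fixed_pt[OF rho_not_cov] by simp
  have r2: "?s \<in> U" if "rho \<notin> K"
  proof -
    have s1: "?s \<in> {1..nv}" "?s \<noteq> rho" using sK that unfolding u(2) by auto
    have "g ?s = ?s" using S1[OF u(1)] .
    hence "\<not> cov ?s" using L2(3) by blast
    thus ?thesis using s1 unfolding U_def cov_def by simp
  qed
  show ?thesis using sK UK r1 r2 by blast
qed

lemma edge_unique: assumes "d \<in> {1..ne}" "d' \<in> {1..ne}" "joins ed d a b" "joins ed d' a b"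
  shows "d = d'"
proof -
  have "ed d = ed d'"
    using assms(3,4) edge_props[OF assms(1)] edge_props[OF assms(2)] unfolding joins_def by auto
  thus ?thesis using inj_onD[OF ed_inj] assms(1,2) by blast
qed

lemma dimer_ok:
  "\<exists>D. D \<subseteq> {1..ne} \<and> D \<inter> C = {} \<and>
          (\<forall>K\<in>components nv ed C.
              (rho \<in> K \<and> (\<forall>d\<in>D. \<not> touches ed d K))
            \<or> (rho \<notin> K \<and> (\<exists>!d. d \<in> D \<and> touches ed d K)
                 \<and> (\<forall>d\<in>D. touches ed d K \<longrightarrow> \<not> (fst (ed d) \<in> K \<and> snd (ed d) \<in> K))))"
proof -
  define D where "D = {e \<in> {1..ne}. \<exists>v\<in>U. joins ed e v (pu v)}"
  have D1: "D \<subseteq> {1..ne}" unfolding D_def by auto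
  have D2: "D \<inter> C = {}"
  proof (rule ccontr)
    assume "D \<inter> C \<noteq> {}"
    then obtain e v where e: "e \<in> C" "v \<in> U" "joins ed e v (pu v)" unfolding D_def by blast
    obtain w where w: "cov w" "ce w = e" using L3[OF e(1)] by blast
    have jw: "joins ed e w (g w)" using L2(2)[OF w(1)] w(2) by simp
    have "w = v \<or> w = pu v" using joins_same[OF e(3) jw] by auto
    thus False using U_not_cov w(1) e(2) L6(1)[OF e(2)] by auto
  qed
  have D3: "(rho \<in> K \<and> (\<forall>d\<in>D. \<not> touches ed d K))
            \<or> (rho \<notin> K \<and> (\<exists>!d. d \<in> D \<and> touches ed d K)
                 \<and> (\<forall>d\<in>D. touches ed d K \<longrightarrow> \<not> (fst (ed d) \<in> K \<and> snd (ed d) \<in> K)))"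
    if K: "K \<in> components nv ed C" for K
  proof -
    obtain s where s: "s \<in> K" "True" "U \<inter> K \<subseteq> {s}"
      "rho \<in> K \<Longrightarrow> s = rho" "rho \<notin> K \<Longrightarrow> s \<in> U"
      using comp_facts[OF K] by blast
    show ?thesis
    proof (cases "rho \<in> K")
      case True
      have UK: "U \<inter> K = {}" using s(3) s(4)[OF True] unfolding U_def by auto
      have "\<not> touches ed d K" if dD: "d \<in> D" for d
      proof -
        obtain v where v: "v \<in> U" "joins ed d v (pu v)" using dD unfolding D_def by blast
        have "v \<notin> K" "pu v \<notin> K" using UK v(1) L6(1)[OF v(1)] by auto
        thus ?thesis using joins_ends[OF v(2), of K] by simp
      qed
      hence "\<forall>d\<in>D. \<not> touches ed d K" by blast
      thus ?thesis using True by (intro disjI1 conjI)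
    next
      case False
      have sU: "s \<in> U" using s(5)[OF False] .
      have pK: "pu s \<notin> K" using s(3) L6(1,2)[OF sU] by auto
      have ends: "joins ed d s (pu s)" if dD: "d \<in> D" and dT: "touches ed d K" for d
      proof -
        obtain v where v: "v \<in> U" "joins ed d v (pu v)" using dD unfolding D_def by blast
        have "v \<in> K \<or> pu v \<in> K" using joins_ends[OF v(2), of K] dT by simp
        hence "v = s \<or> pu v = s" using s(3) v(1) L6(1)[OF v(1)] by auto
        thus ?thesis
        proof
          assume "v = s" thus ?thesis using v by simp
        next
          assume "pu v = s"
          hence "v = pu s" using L6(3)[OF v(1)] by simp
          thus ?thesis using v(2) \<open>pu v = s\<close> joins_sym by simp
        qed
      qed
      obtain e where e: "e \<in> {1..ne}" "joins ed e s (pu s)" using L6(4)[OF sU] by blast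
      have eD: "e \<in> D" unfolding D_def using e sU by blast
      have eT: "touches ed e K" using joins_ends[OF e(2), of K] s(1) by simp
      have uniq: "\<exists>!d. d \<in> D \<and> touches ed d K"
      proof (rule ex1I[of _ e])
        show "e \<in> D \<and> touches ed e K" using eD eT by simp
        fix d assume d: "d \<in> D \<and> touches ed d K"
        show "d = e" using edge_unique[OF _ e(1) ends[of d] e(2)] d D1 by auto
      qed
      have nb: "\<not> (fst (ed d) \<in> K \<and> snd (ed d) \<in> K)" if "d \<in> D" "touches ed d K" for d
        using joins_ends[OF ends[OF that], of K] pK by simp
      have nb': "\<forall>d\<in>D. touches ed d K \<longrightarrow> \<not> (fst (ed d) \<in> K \<and> snd (ed d) \<in> K)"
        using nb by blast
      show ?thesis using False uniq nb' by (intro disjI2 conjI)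
    qed
  qed
  show ?thesis by (rule exI[of _ D]) (intro conjI D1 D2 ballI D3)
qed

end


lemma rot_sum: "(\<Sum>k<L. (f::nat \<Rightarrow> real) ((k + 1) mod L)) = (\<Sum>k<L. f k)"
proof (cases L)
  case 0 thus ?thesis by simp
next
  case (Suc L')
  have "(\<Sum>k<Suc L'. f ((k + 1) mod Suc L')) = (\<Sum>k<L'. f ((k + 1) mod Suc L')) + f ((L' + 1) mod Suc L')"
    by simp
  also have "(\<Sum>k<L'. f ((k + 1) mod Suc L')) = (\<Sum>k<L'. f (Suc k))"
    by (rule sum.cong) auto
  also have "f ((L' + 1) mod Suc L') = f 0" by simp
  also have "(\<Sum>k<Suc L'. f k) = f 0 + (\<Sum>k<L'. f (Suc k))" by (rule sum.lessThan_Suc_shift)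
  ultimately show ?thesis using Suc by simp
qed

context GS
begin

lemma parity: assumes "det M \<noteq> 0" shows "even N"
proof (rule ccontr)
  assume odd: "odd N"
  have "transpose_mat M = (-1) \<cdot>\<^sub>m M"
  proof (rule eq_matI)
    fix i j assume "i < dim_row ((-1) \<cdot>\<^sub>m M)" "j < dim_col ((-1) \<cdot>\<^sub>m M)"
    hence ij: "i < N" "j < N" using M_carrier by auto
    show "transpose_mat M $$ (i, j) = ((-1) \<cdot>\<^sub>m M) $$ (i, j)"
      using ij M_carrier M_skew[OF ij(2,1)] by simp
  qed (use M_carrier in auto)
  hence "det M = det ((-1) \<cdot>\<^sub>m M)" using det_transpose[OF M_carrier] by simp
  also have "\<dots> = (-1) ^ N * det M" using M_carrier by simp
  also have "\<dots> = - det M" using odd by simp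
  finally show False using assms by simp
qed

lemma B_edge_val: assumes "e \<in> C" "j < nv - 1"
  shows "B $$ (ei e, j) = (if V j = fst (ed e) then 1 else if V j = snd (ed e) then -1 else 0)"
proof -
  have i: "ei e < c" "E (ei e) = e" using ei_props[OF assms(1)] by auto
  have "B $$ (ei e, j) = inc $$ (pick I (ei e), pick J j)" using B_entry[OF i(1) assms(2)] .
  also have "\<dots> = (if Suc (pick J j) = fst (ed (Suc (pick I (ei e)))) then 1
      else if Suc (pick J j) = snd (ed (Suc (pick I (ei e)))) then -1 else 0)"
    using inc_entry[OF pickI_lt[OF i(1)] pickJ_lt[OF assms(2)]] .
  finally show ?thesis using i(2) unfolding E_def V_def by simp
qed

lemma nocycle: assumes "det M \<noteq> 0" shows "\<not> has_cycle ed C"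
proof
  assume "has_cycle ed C"
  then obtain es vs where cy: "es \<noteq> []" "length vs = length es" "distinct es" "distinct vs"
    "set es \<subseteq> C" "\<forall>k<length es. joins ed (es ! k) (vs ! k) (vs ! ((k + 1) mod length es))"
    unfolding has_cycle_def by blast
  define L where "L = length es"
  define nx where "nx k = vs ! ((k + 1) mod L)" for k
  define s where "s k = (if ed (es ! k) = (vs ! k, nx k) then 1 else (-1::real))" for k
  define \<sigma> where "\<sigma> e = (\<Sum>k<L. if es ! k = e then s k else 0)" for e
  define x where "x = vec N (\<lambda>i. if i < c then \<sigma> (E i) else 0)"
  have L0: "L > 0" using cy(1) unfolding L_def by simp
  have esC: "k < L \<Longrightarrow> es ! k \<in> C" for k using cy(5) unfolding L_def by auto
  have jn: "k < L \<Longrightarrow> joins ed (es ! k) (vs ! k) (nx k)" for k using cy(6) unfolding L_def nx_def by auto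
  have xv: "x \<in> carrier_vec N" unfolding x_def by simp
  have sB: "s k * B $$ (ei (es ! k), j) = (if V j = vs ! k then 1 else 0) - (if V j = nx k then 1 else 0)"
    if k: "k < L" and j: "j < nv - 1" for k j
  proof -
    have e: "es ! k \<in> {1..ne}" using esC[OF k] Csub by auto
    note ep = edge_props[OF e]
    have val: "B $$ (ei (es ! k), j) = (if V j = fst (ed (es ! k)) then 1 else if V j = snd (ed (es ! k)) then -1 else 0)"
      using B_edge_val[OF esC[OF k] j] .
    show ?thesis
    proof (cases "ed (es ! k) = (vs ! k, nx k)")
      case True
      thus ?thesis unfolding val s_def using ep by auto
    next
      case False
      hence F: "ed (es ! k) = (nx k, vs ! k)" using jn[OF k] unfolding joins_def by auto
      thus ?thesis unfolding val s_def using ep False by auto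
    qed
  qed
  have col0: "(\<Sum>i<c. B $$ (i, j) * \<sigma> (E i)) = 0" if j: "j < nv - 1" for j
  proof -
    have "(\<Sum>i<c. B $$ (i, j) * \<sigma> (E i)) = (\<Sum>i<c. \<Sum>k<L. if es ! k = E i then s k * B $$ (i, j) else 0)"
      unfolding \<sigma>_def by (simp add: sum_distrib_left mult.commute if_distrib cong: if_cong)
    also have "\<dots> = (\<Sum>k<L. \<Sum>i<c. if es ! k = E i then s k * B $$ (i, j) else 0)"
      by (rule sum.swap)
    also have "\<dots> = (\<Sum>k<L. s k * B $$ (ei (es ! k), j))"
    proof (rule sum.cong)
      fix k assume "k \<in> {..<L}"
      hence k: "k < L" by simp
      have ek: "ei (es ! k) < c" "E (ei (es ! k)) = es ! k" using ei_props[OF esC[OF k]] by auto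
      have "(\<Sum>i<c. if es ! k = E i then s k * B $$ (i, j) else 0)
          = (\<Sum>i\<in>{ei (es ! k)}. s k * B $$ (i, j))"
      proof (rule sum.mono_neutral_cong_right)
        show "{ei (es ! k)} \<subseteq> {..<c}" using ek by simp
        show "\<forall>i\<in>{..<c} - {ei (es ! k)}. (if es ! k = E i then s k * B $$ (i, j) else 0) = 0"
        proof
          fix i assume "i \<in> {..<c} - {ei (es ! k)}"
          hence "i < c" "i \<noteq> ei (es ! k)" by auto
          hence "es ! k \<noteq> E i" using E_inj[OF _ ek(1)] ek(2) by metis
          thus "(if es ! k = E i then s k * B $$ (i, j) else 0) = 0" by simp
        qed
        show "\<And>i. i \<in> {ei (es ! k)} \<Longrightarrow> (if es ! k = E i then s k * B $$ (i, j) else 0) = s k * B $$ (i, j)"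
          using ek by simp
      qed simp
      thus "(\<Sum>i<c. if es ! k = E i then s k * B $$ (i, j) else 0) = s k * B $$ (ei (es ! k), j)" by simp
    qed simp
    also have "\<dots> = (\<Sum>k<L. (if V j = vs ! k then 1 else 0) - (if V j = nx k then 1 else 0))"
      by (rule sum.cong) (use sB j in auto)
    also have "\<dots> = (\<Sum>k<L. (if V j = vs ! k then 1 else 0)) - (\<Sum>k<L. (if V j = vs ! ((k + 1) mod L) then 1 else 0))"
      unfolding nx_def by (simp add: sum_subtractf)
    also have "(\<Sum>k<L. (if V j = vs ! ((k + 1) mod L) then 1 else 0)) = (\<Sum>k<L. (if V j = vs ! k then 1 else (0::real)))"
      using rot_sum[where L=L and f="\<lambda>k. if V j = vs ! k then 1 else 0"] by simp
    finally show ?thesis by simp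
  qed
  have "M *\<^sub>v x = 0\<^sub>v N"
  proof (rule eq_vecI)
    fix r assume "r < dim_vec (0\<^sub>v N :: real vec)"
    hence r: "r < N" by simp
    have "(M *\<^sub>v x) $ r = (\<Sum>i<N. M $$ (r, i) * x $ i)"
      using r M_carrier xv by (simp add: scalar_prod_def lessThan_atLeast0)
    also have "\<dots> = (\<Sum>i<c. M $$ (r, i) * \<sigma> (E i))"
    proof -
      have "(\<Sum>i<N. M $$ (r, i) * x $ i) = (\<Sum>i<c. M $$ (r, i) * x $ i)"
        by (rule sum.mono_neutral_right) (auto simp: x_def)
      also have "\<dots> = (\<Sum>i<c. M $$ (r, i) * \<sigma> (E i))"
        by (rule sum.cong) (auto simp: x_def)
      finally show ?thesis .
    qed
    also have "\<dots> = 0"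
    proof (cases "r < c")
      case True
      thus ?thesis using M_entry r by simp
    next
      case False
      hence j: "r - c < nv - 1" using r by linarith
      have "(\<Sum>i<c. M $$ (r, i) * \<sigma> (E i)) = (\<Sum>i<c. - (B $$ (i, r - c) * \<sigma> (E i)))"
        by (rule sum.cong) (use M_entry r False in auto)
      also have "\<dots> = - (\<Sum>i<c. B $$ (i, r - c) * \<sigma> (E i))" by (simp add: sum_negf)
      finally show ?thesis using col0[OF j] by simp
    qed
    finally show "(M *\<^sub>v x) $ r = 0\<^sub>v N $ r" using r by simp
  qed (use M_carrier in simp)
  moreover have "x \<noteq> 0\<^sub>v N"
  proof
    assume x0: "x = 0\<^sub>v N"
    have e0: "es ! 0 \<in> C" using esC L0 by simp
    have i0: "ei (es ! 0) < c" "E (ei (es ! 0)) = es ! 0" using ei_props[OF e0] by auto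
    have "x $ ei (es ! 0) = \<sigma> (es ! 0)" unfolding x_def using i0 by simp
    also have "\<sigma> (es ! 0) = (\<Sum>k\<in>{0}. s k)"
      unfolding \<sigma>_def
    proof (rule sum.mono_neutral_cong_right)
      show "{0} \<subseteq> {..<L}" using L0 by simp
      show "\<forall>k\<in>{..<L} - {0}. (if es ! k = es ! 0 then s k else 0) = 0"
        using cy(3) L0 unfolding L_def by (auto simp: nth_eq_iff_index_eq)
    qed auto
    also have "\<dots> \<noteq> 0" unfolding s_def by simp
    finally show False using x0 i0 by simp
  qed
  ultimately have "det M = 0" using det_0_iff_vec_prod_zero[OF M_carrier] xv by blast
  thus False using assms by simp
qed

end

theorem mainTheorem10:
  fixes nv ne :: nat and ed :: "nat \<Rightarrow> nat \<times> nat" and rho :: nat and C :: "nat set"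
  assumes "edge_graph nv ne ed"
    and "connected_graph nv ne ed"
    and "rho \<in> {1..nv}"
    and "C \<subseteq> {1..ne}"
    and "inverse (\<Prod>i\<in>{1..nv} - {rho}. real (deg nv ne ed i))
           * det (block_mat nv ne ed C rho) \<noteq> 0"
  shows "dimer_rooted_forest nv ne ed rho C"
proof -
  interpret GS nv ne ed rho C using assms(1,3,4) by unfold_locales
  have dM: "det M \<noteq> 0" using assms(5) by (metis mult_zero_right)
  have nc: "\<not> has_cycle ed C" using nocycle[OF dM] .
  have ev: "even (card C + (nv - 1))" using parity[OF dM] .
  have sk: "\<And>i j. i < N \<Longrightarrow> j < N \<Longrightarrow> M $$ (i, j) = - M $$ (j, i)" using M_skew by blast
  have "(\<Sum>p | p permutes {0..<N}. of_int (sign p) * (\<Prod>i=0..<N. M $$ (i, p i))) \<noteq> 0"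
    using dM det_def'[OF M_carrier] by simp
  from skew_matching[where a="\<lambda>i j. M $$ (i, j)", OF sk this]
  obtain \<mu> where mu: "\<forall>i<N. \<mu> i < N \<and> \<mu> (\<mu> i) = i \<and> \<mu> i \<noteq> i \<and> M $$ (i, \<mu> i) \<noteq> 0"
    by blast
  interpret GM nv ne ed rho C \<mu> using mu nc by unfold_locales auto
  show ?thesis unfolding dimer_rooted_forest_def using assms(4) nc ev dimer_ok by blast
qed

end
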